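(* Let $n\ge1$, let $\lambda,k$ be constants, and let $\phi$ be a smooth function on an open interval $I$ with $\phi>0$ and $\phi'>0$ on $I$ satisfying $$\frac{(\phi^2)''}{(\phi^2)'}=-2\lambda\phi^n+k\phi'.$$ On $M=\mathcal H_{2n+1}\times I$ consider the metric $$g=\sum_{i=1}^n\phi(q)(\sigma_i^2+\rho_i^2)+\frac{\phi'(q)}{\phi(q)^{n-1}}\zeta^2+\phi(q)^{n-1}\phi'(q)\,dq^2$$ and the almost complex structure $J$ with $JX_i=Y_i$, $JY_i=-X_i$, $J\partial_q=\phi^{n-1}Z$, $JZ=-\phi^{1-n}\partial_q$. Then $(g,J)$ is Kähler with Kähler form $\omega=d(\phi\zeta)$, and $g$ is a gradient Kähler-Ricci soliton, $\mathrm{Ric}+\nabla df=\lambda g$, with potential $f=k\phi$ (up to an additive constant).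
   Context: $\mathcal H_{2n+1}$ is the $(2n+1)$-dimensional Heisenberg group, identified with $\mathbb R^{2n+1}$ with global coordinates $(x_1,\dots,x_n,y_1,\dots,y_n,z)$ so that the vector fields $X_i=\partial_{x_i}$, $Y_i=\partial_{y_i}+x_i\partial_z$, $Z=-\partial_z$ are left-invariant; the dual left-invariant coframe is $\sigma_i=dx_i$, $\rho_i=dy_i$, $\zeta=\sum_{i=1}^n x_i\,dy_i-dz$. The variable $q$ is the coordinate on $I$, and the prime denotes $d/dq$. $\mathcal H_{2n+1}$ acts on $M$ by left multiplication on the first factor, isometrically and with cohomogeneity one. *)

theory Defs
  imports "HOL-Analysis.Analysis"
begin

(* Coordinates on R^N are functions p :: nat => real; only p 0 .. p (N-1) matter. *)

definition smooth_on :: "real set \<Rightarrow> (real \<Rightarrow> real) \<Rightarrow> bool" where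
  "smooth_on I f \<longleftrightarrow> (\<forall>k. \<forall>x\<in>I. ((deriv ^^ k) f) differentiable (at x))"

definition pd :: "nat \<Rightarrow> ((nat \<Rightarrow> real) \<Rightarrow> real) \<Rightarrow> (nat \<Rightarrow> real) \<Rightarrow> real" where
  "pd i F p = deriv (\<lambda>t. F (p(i := t))) (p i)"

type_synonym metric = "(nat \<Rightarrow> real) \<Rightarrow> nat \<Rightarrow> nat \<Rightarrow> real"

definition inv_metric :: "nat \<Rightarrow> metric \<Rightarrow> metric" where
  "inv_metric N g p = (SOME B. \<forall>a<N. \<forall>b<N.
      (\<Sum>d<N. g p a d * B d b) = (if a = b then 1 else 0))"

definition christoffel :: "nat \<Rightarrow> metric \<Rightarrow> nat \<Rightarrow> nat \<Rightarrow> nat \<Rightarrow> (nat \<Rightarrow> real) \<Rightarrow> real" where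
  "christoffel N g c a b p = (\<Sum>d<N. inv_metric N g p c d *
      (pd a (\<lambda>x. g x b d) p + pd b (\<lambda>x. g x a d) p - pd d (\<lambda>x. g x a b) p)) / 2"

definition ricci :: "nat \<Rightarrow> metric \<Rightarrow> metric" where
  "ricci N g p b c =
     (\<Sum>a<N. pd a (\<lambda>x. christoffel N g a b c x) p)
   - (\<Sum>a<N. pd c (\<lambda>x. christoffel N g a a b x) p)
   + (\<Sum>a<N. \<Sum>d<N. christoffel N g a a d p * christoffel N g d b c p
                   - christoffel N g a c d p * christoffel N g d a b p)"

definition hessian :: "nat \<Rightarrow> metric \<Rightarrow> ((nat \<Rightarrow> real) \<Rightarrow> real) \<Rightarrow> metric" where
  "hessian N g f p a b = pd a (\<lambda>x. pd b f x) p - (\<Sum>c<N. christoffel N g c a b p * pd c f p)"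

(* a (1,1)-tensor J: J p c b = c-th component of J(d/dx_b) *)
definition nabla_J :: "nat \<Rightarrow> metric \<Rightarrow> metric \<Rightarrow> nat \<Rightarrow> nat \<Rightarrow> nat \<Rightarrow> (nat \<Rightarrow> real) \<Rightarrow> real" where
  "nabla_J N g J a c b p = pd a (\<lambda>x. J x c b) p
     + (\<Sum>d<N. christoffel N g c a d p * J p d b)
     - (\<Sum>d<N. christoffel N g d a b p * J p c d)"

definition is_kaehler :: "nat \<Rightarrow> (nat \<Rightarrow> real) set \<Rightarrow> metric \<Rightarrow> metric \<Rightarrow> bool" where
  "is_kaehler N D g J \<longleftrightarrow> (\<forall>p\<in>D.
      (\<forall>a<N. \<forall>b<N. g p a b = g p b a)
    \<and> (\<forall>v. (\<exists>a<N. v a \<noteq> 0) \<longrightarrow> (\<Sum>a<N. \<Sum>b<N. g p a b * v a * v b) > 0)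
    \<and> (\<forall>a<N. \<forall>b<N. (\<Sum>c<N. J p a c * J p c b) = (if a = b then -1 else 0))
    \<and> (\<forall>a<N. \<forall>b<N. (\<Sum>c<N. \<Sum>d<N. J p c a * J p d b * g p c d) = g p a b)
    \<and> (\<forall>a<N. \<forall>b<N. \<forall>c<N. nabla_J N g J a c b p = 0))"

definition kaehler_form :: "nat \<Rightarrow> metric \<Rightarrow> metric \<Rightarrow> metric" where
  "kaehler_form N g J p a b = (\<Sum>c<N. J p c a * g p c b)"

definition ext_d :: "((nat \<Rightarrow> real) \<Rightarrow> nat \<Rightarrow> real) \<Rightarrow> metric" where
  "ext_d \<alpha> p a b = pd a (\<lambda>x. \<alpha> x b) p - pd b (\<lambda>x. \<alpha> x a) p"

(* ---- The Heisenberg model: coordinates x_i = index i (i<n), y_i = index n+i,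
        z = index 2n, q = index 2n+1;  N = 2n+2 ---- *)

definition dvec :: "nat \<Rightarrow> nat \<Rightarrow> real" where
  "dvec j a = (if a = j then 1 else 0)"

definition pair :: "nat \<Rightarrow> (nat \<Rightarrow> real) \<Rightarrow> (nat \<Rightarrow> real) \<Rightarrow> real" where
  "pair N \<theta> v = (\<Sum>a<N. \<theta> a * v a)"

definition qc :: "nat \<Rightarrow> (nat \<Rightarrow> real) \<Rightarrow> real" where
  "qc n p = p (2*n+1)"

(* coframe sigma_i = dx_i, rho_i = dy_i, zeta = sum x_i dy_i - dz *)
definition sigma_h :: "nat \<Rightarrow> nat \<Rightarrow> real" where "sigma_h i = dvec i"
definition rho_h :: "nat \<Rightarrow> nat \<Rightarrow> nat \<Rightarrow> real" where "rho_h n i = dvec (n+i)"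
definition zeta_h :: "nat \<Rightarrow> (nat \<Rightarrow> real) \<Rightarrow> nat \<Rightarrow> real" where
  "zeta_h n p a = (\<Sum>i<n. p i * dvec (n+i) a) - dvec (2*n) a"
definition dq_h :: "nat \<Rightarrow> nat \<Rightarrow> real" where "dq_h n = dvec (2*n+1)"

(* frame X_i = d/dx_i, Y_i = d/dy_i + x_i d/dz, Z = - d/dz, d/dq *)
definition X_h :: "nat \<Rightarrow> nat \<Rightarrow> real" where "X_h i = dvec i"
definition Y_h :: "nat \<Rightarrow> (nat \<Rightarrow> real) \<Rightarrow> nat \<Rightarrow> nat \<Rightarrow> real" where
  "Y_h n p i a = dvec (n+i) a + p i * dvec (2*n) a"
definition Z_h :: "nat \<Rightarrow> nat \<Rightarrow> real" where "Z_h n a = - dvec (2*n) a"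
definition dqv_h :: "nat \<Rightarrow> nat \<Rightarrow> real" where "dqv_h n = dvec (2*n+1)"

definition heis_metric :: "nat \<Rightarrow> (real \<Rightarrow> real) \<Rightarrow> metric" where
  "heis_metric n \<phi> p a b =
     (\<Sum>i<n. \<phi> (qc n p) * (sigma_h i a * sigma_h i b + rho_h n i a * rho_h n i b))
   + deriv \<phi> (qc n p) / \<phi> (qc n p) ^ (n-1) * (zeta_h n p a * zeta_h n p b)
   + \<phi> (qc n p) ^ (n-1) * deriv \<phi> (qc n p) * (dq_h n a * dq_h n b)"

(* J X_i = Y_i, J Y_i = -X_i, J d/dq = phi^(n-1) Z, J Z = - phi^(1-n) d/dq,
   extended linearly via the dual coframe (sigma_i, rho_i, zeta, dq) *)
definition heis_J :: "nat \<Rightarrow> (real \<Rightarrow> real) \<Rightarrow> metric" where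
  "heis_J n \<phi> p c b =
     (let N = 2*n+2; v = dvec b in
      (\<Sum>i<n. pair N (sigma_h i) v * Y_h n p i c - pair N (rho_h n i) v * X_h i c)
      + pair N (zeta_h n p) v * (- (1 / \<phi> (qc n p) ^ (n-1)) * dqv_h n c)
      + pair N (dq_h n) v * (\<phi> (qc n p) ^ (n-1) * Z_h n c))"

end

theory Submission
  imports Defs
begin


lemma rdiff_fdiff: "(f::real\<Rightarrow>real) differentiable (at x) \<longleftrightarrow> f field_differentiable (at x)"
  using DERIV_deriv_iff_real_differentiable DERIV_deriv_iff_field_differentiable by blast

definition dd :: "nat \<Rightarrow> ((nat \<Rightarrow> real) \<Rightarrow> real) \<Rightarrow> (nat \<Rightarrow> real) \<Rightarrow> bool" where
  "dd i F p \<longleftrightarrow> (\<lambda>t. F (p(i:=t))) field_differentiable (at (p i))"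

lemma dd_const[simp]: "dd i (\<lambda>x. c) p" by (simp add: dd_def)
lemma pd_const[simp]: "pd i (\<lambda>x. c) p = 0" by (simp add: pd_def)

lemma dd_coord[simp]: "dd i (\<lambda>x. x j) p"
  by (cases "i = j") (simp_all add: dd_def field_differentiable_ident)

lemma pd_coord[simp]: "pd i (\<lambda>x. x j) p = (if i = j then 1 else 0)"
  by (cases "i = j") (simp_all add: pd_def)

lemma dd_add[simp]: "dd i F p \<Longrightarrow> dd i G p \<Longrightarrow> dd i (\<lambda>x. F x + G x) p"
  by (simp add: dd_def field_differentiable_add)
lemma pd_add[simp]: "dd i F p \<Longrightarrow> dd i G p \<Longrightarrow> pd i (\<lambda>x. F x + G x) p = pd i F p + pd i G p"
  by (simp add: dd_def pd_def)
lemma dd_diff[simp]: "dd i F p \<Longrightarrow> dd i G p \<Longrightarrow> dd i (\<lambda>x. F x - G x) p"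
  by (simp add: dd_def field_differentiable_diff)
lemma pd_diff[simp]: "dd i F p \<Longrightarrow> dd i G p \<Longrightarrow> pd i (\<lambda>x. F x - G x) p = pd i F p - pd i G p"
  by (simp add: dd_def pd_def)
lemma dd_minus[simp]: "dd i F p \<Longrightarrow> dd i (\<lambda>x. - F x) p"
  by (simp add: dd_def field_differentiable_minus)
lemma pd_minus[simp]: "dd i F p \<Longrightarrow> pd i (\<lambda>x. - F x) p = - pd i F p"
  by (simp add: dd_def pd_def)
lemma dd_mult[simp]: "dd i F p \<Longrightarrow> dd i G p \<Longrightarrow> dd i (\<lambda>x. F x * G x) p"
  by (simp add: dd_def field_differentiable_mult)
lemma pd_mult[simp]: "dd i F p \<Longrightarrow> dd i G p \<Longrightarrow> pd i (\<lambda>x. F x * G x) p = F p * pd i G p + pd i F p * G p"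
  by (simp add: dd_def pd_def)
lemma dd_if[simp]: "dd i F p \<Longrightarrow> dd i G p \<Longrightarrow> dd i (\<lambda>x. if C then F x else G x) p"
  by (cases C) (simp_all only: if_True if_False)
lemma pd_if[simp]: "pd i (\<lambda>x. if C then F x else G x) p = (if C then pd i F p else pd i G p)"
  by (cases C) (simp_all only: if_True if_False)
lemma dd_sum[simp]: "(\<And>j. dd i (F j) p) \<Longrightarrow> dd i (\<lambda>x. \<Sum>j\<in>A. F j x) p"
  unfolding dd_def by (rule field_differentiable_sum) auto
lemma pd_sum[simp]: "(\<And>j. dd i (F j) p) \<Longrightarrow> pd i (\<lambda>x. \<Sum>j\<in>A. F j x) p = (\<Sum>j\<in>A. pd i (F j) p)"
  unfolding dd_def pd_def by (rule deriv_sum) auto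

lemma dd_qfun: "h field_differentiable (at (p j)) \<Longrightarrow> dd i (\<lambda>x. h (x j)) p"
  by (cases "i = j") (simp_all add: dd_def)
lemma pd_qfun: "h field_differentiable (at (p j)) \<Longrightarrow> pd i (\<lambda>x. h (x j)) p = (if i = j then deriv h (p j) else 0)"
  by (cases "i = j") (simp_all add: pd_def)

lemma nhds_fun_upd:
  assumes "open I" "p j \<in> I"
  shows "eventually (\<lambda>t. (p(i:=t)) j \<in> I) (nhds (p i))"
proof (cases "i = j")
  case True
  then show ?thesis using eventually_nhds_in_open[OF assms] by simp
next
  case False
  then show ?thesis using assms by simp
qed

lemma pd_local:
  assumes "open I" "p j \<in> I" "\<And>x. x j \<in> I \<Longrightarrow> F x = G x"
  shows "pd i F p = pd i G p"
  unfolding pd_def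
  by (rule deriv_cong_ev[OF eventually_mono[OF nhds_fun_upd[of I p j i, OF assms(1,2)]]]) (auto simp: assms(3))

lemma dd_local:
  assumes "open I" "p j \<in> I" "\<And>x. x j \<in> I \<Longrightarrow> F x = G x" "dd i G p"
  shows "dd i F p"
proof -
  have ev: "eventually (\<lambda>t. F (p(i:=t)) = G (p(i:=t))) (nhds (p i))"
    by (rule eventually_mono[OF nhds_fun_upd[of I p j i, OF assms(1,2)]]) (auto simp: assms(3))
  have "F (p(i := p i)) = G (p(i:= p i))" using assms(2,3) by simp
  then show ?thesis using assms(4) unfolding dd_def field_differentiable_def
    using DERIV_cong_ev[OF refl ev refl] by simp
qed


lemma sum_split4:
  fixes F :: "nat \<Rightarrow> real"
  shows "(\<Sum>a<2*n+2. F a) = (\<Sum>i<n. F i) + (\<Sum>i<n. F (n+i)) + F (2*n) + F (2*n+1)"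
proof -
  have "(\<Sum>a<2*n+2. F a) = (\<Sum>a<2*n. F a) + F (2*n) + F(2*n+1)" by simp
  moreover have "(\<Sum>a<2*n. F a) = (\<Sum>i<n. F i) + (\<Sum>i<n. F (n+i))"
  proof -
    have "{..<2*n} = {..<n} \<union> {n..<2*n}" by auto
    then have "(\<Sum>a<2*n. F a) = (\<Sum>i<n. F i) + (\<Sum>a\<in>{n..<2*n}. F a)"
      by (simp add: sum.union_disjoint ivl_disj_int)
    moreover have "(\<Sum>a\<in>{n..<2*n}. F a) = (\<Sum>i<n. F (n+i))"
      using sum.shift_bounds_nat_ivl[of F 0 n n] by (simp add: lessThan_atLeast0 add.commute mult_2)
    ultimately show ?thesis by simp
  qed
  ultimately show ?thesis by simp
qed

lemma ifm1: "(if P then a else 0) * (b::real) = (if P then a*b else 0)" by simp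
lemma ifm2: "(b::real) * (if P then a else 0) = (if P then b*a else 0)" by simp

lemma idx_cases[consumes 1, case_names X Y Z Q]:
  fixes a n :: nat
  assumes "a < 2*n+2"
    "\<And>k. k < n \<Longrightarrow> a = k \<Longrightarrow> P" "\<And>k. k < n \<Longrightarrow> a = n+k \<Longrightarrow> P"
    "a = 2*n \<Longrightarrow> P" "a = 2*n+1 \<Longrightarrow> P"
  shows P
proof -
  consider "a < n" | "n \<le> a \<and> a < 2*n" | "a = 2*n" | "a = 2*n+1" using assms(1) by linarith
  then show P
  proof cases
    case 1 then show ?thesis using assms(2) by blast
  next
    case 2 then show ?thesis using assms(3)[of "a-n"] by auto
  qed (use assms in auto)
qed

locale H =
  fixes n :: nat and \<phi> :: "real \<Rightarrow> real" and I :: "real set"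
  assumes n1: "n \<ge> 1" and oI: "open I" and sm: "smooth_on I \<phi>"
    and pos: "\<forall>q\<in>I. \<phi> q > 0 \<and> deriv \<phi> q > 0"
begin

definition "D1 = deriv \<phi>"
definition "D2 = deriv D1"
definition "D3 = deriv D2"
definition "Af q = D1 q / \<phi> q ^ (n-1)"
definition "Bf q = \<phi> q ^ (n-1) * D1 q"
definition "zt x a = (if n \<le> a \<and> a < 2*n then x (a-n) else 0) - (if a = 2*n then 1 else (0::real))"
definition "SS x = (\<Sum>i<n. x i * x i)"

lemma phi_pos: "q \<in> I \<Longrightarrow> \<phi> q > 0" using pos by auto
lemma D1_pos: "q \<in> I \<Longrightarrow> D1 q > 0" using pos by (auto simp: D1_def)
lemma Af_pos: "q \<in> I \<Longrightarrow> Af q > 0" using phi_pos D1_pos by (simp add: Af_def)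
lemma Bf_pos: "q \<in> I \<Longrightarrow> Bf q > 0" using phi_pos D1_pos by (simp add: Bf_def)

lemma zeta_eq: "zeta_h n x a = zt x a"
proof -
  have "(\<Sum>i<n. x i * dvec (n+i) a) = (if n \<le> a \<and> a < 2*n then x (a-n) else 0)"
  proof (cases "n \<le> a \<and> a < 2*n")
    case True
    then have "(\<Sum>i<n. x i * dvec (n+i) a) = (\<Sum>i<n. if i = a - n then x i else 0)"
      by (intro sum.cong) (auto simp: dvec_def)
    then show ?thesis using True by (simp add: sum.delta) arith
  next
    case False
    then have "(\<Sum>i<n. x i * dvec (n+i) a) = (\<Sum>i<n. 0)"
      by (intro sum.cong) (auto simp: dvec_def)
    then show ?thesis using False by auto
  qed
  then show ?thesis by (simp add: zeta_h_def zt_def dvec_def)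
qed

lemma g_eq: "heis_metric n \<phi> x a b = \<phi> (x (2*n+1)) * (if a = b \<and> a < 2*n then 1 else 0)
   + Af (x (2*n+1)) * (zt x a * zt x b) + Bf (x (2*n+1)) * (if a = 2*n+1 \<and> b = 2*n+1 then 1 else 0)"
proof -
  have "(\<Sum>i<n. \<phi> (qc n x) * (sigma_h i a * sigma_h i b + rho_h n i a * rho_h n i b))
     = \<phi> (qc n x) * (\<Sum>i<n. (if i = a then (if i = b then 1 else 0) else 0) + (if i = a - n then (if n \<le> a \<and> a = b then 1 else 0) else 0))"
    unfolding sum_distrib_left by (intro sum.cong) (auto simp: sigma_h_def rho_h_def dvec_def)
  also have "\<dots> = \<phi> (qc n x) * (if a = b \<and> a < 2*n then 1 else 0)"
    by (simp add: sum.distrib sum.delta) linarith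
  finally show ?thesis
    by (simp add: heis_metric_def zeta_eq Af_def Bf_def D1_def dq_h_def dvec_def qc_def)
qed


lemma smooth_k: "q \<in> I \<Longrightarrow> ((deriv ^^ k) \<phi>) field_differentiable (at q)"
  using sm unfolding smooth_on_def rdiff_fdiff by blast

lemma diff_phi: "q \<in> I \<Longrightarrow> \<phi> field_differentiable (at q)"
  using smooth_k[of q 0] by simp
lemma diff_D1: "q \<in> I \<Longrightarrow> D1 field_differentiable (at q)"
  using smooth_k[of q 1] by (simp add: D1_def)
lemma diff_D2: "q \<in> I \<Longrightarrow> D2 field_differentiable (at q)"
  using smooth_k[of q 2] by (simp add: D1_def D2_def numeral_2_eq_2)
lemma diff_D3: "q \<in> I \<Longrightarrow> D3 field_differentiable (at q)"
  using smooth_k[of q 3] by (simp add: D1_def D2_def D3_def numeral_3_eq_3)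

lemma diff_pow: "q \<in> I \<Longrightarrow> (\<lambda>t. \<phi> t ^ m) field_differentiable (at q)"
  by (intro field_differentiable_power diff_phi)

lemma diff_Af: "q \<in> I \<Longrightarrow> Af field_differentiable (at q)"
  unfolding Af_def[abs_def] using phi_pos[of q]
  by (intro field_differentiable_divide diff_D1 diff_pow) auto
lemma diff_Bf: "q \<in> I \<Longrightarrow> Bf field_differentiable (at q)"
  unfolding Bf_def[abs_def]
  by (intro field_differentiable_mult diff_D1 diff_pow) auto

lemmas diffs = diff_phi diff_D1 diff_D2 diff_D3 diff_Af diff_Bf

definition "dzt c a = (if n \<le> a \<and> a < 2*n \<and> c = a - n then 1 else (0::real))"

definition "DG p c a b = (if c = 2*n+1 then D1 (p c) * (if a = b \<and> a < 2*n then 1 else 0)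
   + deriv Af (p c) * (zt p a * zt p b) + deriv Bf (p c) * (if a = 2*n+1 \<and> b = 2*n+1 then 1 else 0) else 0)
   + Af (p (2*n+1)) * (dzt c a * zt p b + zt p a * dzt c b)"

lemma dg_eq: "p (2*n+1) \<in> I \<Longrightarrow> pd c (\<lambda>x. heis_metric n \<phi> x a b) p = DG p c a b"
  unfolding g_eq zt_def
  apply (simp add: dd_qfun pd_qfun diffs)
  apply (simp add: DG_def zt_def dzt_def D1_def)
  apply (intro conjI impI; (simp; fail)?; arith?)
  done

end
context H begin

lemma sum_rc1: "(\<Sum>i\<in>A. f i * (g i * c)) = (\<Sum>i\<in>A. f i * g i) * (c::real)"
  by (simp add: sum_distrib_right mult.assoc)
lemma sum_rc2: "(\<Sum>i\<in>A. f i * (g i * (h i * c))) = (\<Sum>i\<in>A. f i * (g i * h i)) * (c::real)"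
  by (simp add: sum_distrib_right mult.assoc)

lemmas sumnorm = sum_rc1 sum_rc2 sum.distrib sum_subtractf sum_negf sum_distrib_left[symmetric] sum_distrib_right[symmetric]
  sum_divide_distrib[symmetric] ring_distribs mult.assoc ifm1 ifm2 sum.delta sum.delta'

lemma SS_fold: "(\<Sum>i<n. x i * x i) = SS x" by (simp add: SS_def)

definition "GI p a b = (let q = p (2*n+1) in
   (if a = b \<and> a < 2*n then 1 / \<phi> q else 0)
 + (if n \<le> a \<and> a < 2*n \<and> b = 2*n then p (a-n) / \<phi> q else 0)
 + (if a = 2*n \<and> n \<le> b \<and> b < 2*n then p (b-n) / \<phi> q else 0)
 + (if a = 2*n \<and> b = 2*n then SS p / \<phi> q + 1 / Af q else 0)
 + (if a = 2*n+1 \<and> b = 2*n+1 then 1 / Bf q else 0))"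

lemma g_GI:
  assumes q: "p (2*n+1) \<in> I" and ab: "a < 2*n+2" "b < 2*n+2"
  shows "(\<Sum>d<2*n+2. heis_metric n \<phi> p a d * GI p d b) = (if a = b then 1 else 0)"
proof -
  have P: "\<phi> (p (2*n+1)) > 0" "Af (p (2*n+1)) > 0" "Bf (p (2*n+1)) > 0"
    using q phi_pos Af_pos Bf_pos by auto
  show ?thesis
    unfolding sum_split4
    apply (rule idx_cases[OF ab(1)]; rule idx_cases[OF ab(2)])
    using P apply (simp_all add: g_eq zt_def GI_def Let_def ifm1 ifm2 sum.delta sum.distrib SS_def)
    using P apply (simp_all add: sumnorm)
    using P apply (simp_all add: field_simps)
    done
qed


lemma g_sym: "heis_metric n \<phi> x a b = heis_metric n \<phi> x b a"
  unfolding g_eq by (cases "a = b") (auto simp: mult.commute)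

lemma GI_sym: "GI x a b = GI x b a"
  unfolding GI_def Let_def by (cases "a = b") auto

lemma GI_g:
  assumes q: "p (2*n+1) \<in> I" and ab: "a < 2*n+2" "b < 2*n+2"
  shows "(\<Sum>d<2*n+2. GI p a d * heis_metric n \<phi> p d b) = (if a = b then 1 else 0)"
  using g_GI[of p b a, OF q ab(2,1)] by (simp add: g_sym GI_sym mult.commute eq_commute)

lemma inv_eq:
  assumes q: "p (2*n+1) \<in> I" and cb: "c < 2*n+2" "b < 2*n+2"
  shows "inv_metric (2*n+2) (heis_metric n \<phi>) p c b = GI p c b"
proof -
  let ?N = "2*n+2"
  let ?g = "heis_metric n \<phi> p"
  define B where "B = inv_metric ?N (heis_metric n \<phi>) p"
  have ex: "\<forall>a<?N. \<forall>b<?N. (\<Sum>d<?N. ?g a d * GI p d b) = (if a = b then 1 else 0)"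
    using g_GI[of p, OF q] by blast
  have hB: "\<forall>a<?N. \<forall>b<?N. (\<Sum>d<?N. ?g a d * B d b) = (if a = b then 1 else 0)"
    unfolding B_def inv_metric_def by (rule someI[of _ "GI p"]) (use ex in auto)
  have "(\<Sum>d<?N. GI p c d * (\<Sum>e<?N. ?g d e * B e b)) = (\<Sum>d<?N. GI p c d * (if d = b then 1 else 0))"
    using hB cb by (intro sum.cong) auto
  also have "\<dots> = GI p c b" using cb by (simp add: ifm2 sum.delta)
  finally have 1: "(\<Sum>d<?N. GI p c d * (\<Sum>e<?N. ?g d e * B e b)) = GI p c b" .
  have "(\<Sum>d<?N. GI p c d * (\<Sum>e<?N. ?g d e * B e b)) = (\<Sum>d<?N. \<Sum>e<?N. GI p c d * (?g d e * B e b))"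
    by (simp only: sum_distrib_left)
  also have "\<dots> = (\<Sum>e<?N. \<Sum>d<?N. GI p c d * (?g d e * B e b))" by (rule sum.swap)
  also have "\<dots> = (\<Sum>e<?N. (\<Sum>d<?N. GI p c d * ?g d e) * B e b)"
    by (simp only: sum_distrib_right mult.assoc)
  also have "\<dots> = (\<Sum>e<?N. (if c = e then 1 else 0) * B e b)"
    using GI_g[of p, OF q] cb by (intro sum.cong) auto
  also have "\<dots> = B c b" using cb by (simp add: ifm1 sum.delta)
  finally show ?thesis using 1 B_def by simp
qed


definition "G1 q = - D1 q / (2 * Bf q)"
definition "G2 q = Af q / (2 * \<phi> q)"
definition "G3 q = D1 q / (2 * \<phi> q)"
definition "G4 q = - deriv Af q / (2 * Bf q)"
definition "G5 q = deriv Af q / (2 * Af q)"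
definition "G6 q = deriv Bf q / (2 * Bf q)"

definition "GamC p c a b = (let q = p (2*n+1) in
  (if a < n \<and> b < n \<and> a = b \<and> c = 2*n+1 then G1 q else 0)
+ (if a < n \<and> n \<le> b \<and> b < 2*n \<and> c = n + a then G2 q * p (b-n) else 0)
+ (if b < n \<and> n \<le> a \<and> a < 2*n \<and> c = n + b then G2 q * p (a-n) else 0)
+ (if a < n \<and> n \<le> b \<and> b < 2*n \<and> c = 2*n then G2 q * p a * p (b-n) - (if b = n + a then 1/2 else 0) else 0)
+ (if b < n \<and> n \<le> a \<and> a < 2*n \<and> c = 2*n then G2 q * p b * p (a-n) - (if a = n + b then 1/2 else 0) else 0)
+ (if a < n \<and> b = 2*n \<and> c = n + a then - G2 q else 0)
+ (if b < n \<and> a = 2*n \<and> c = n + b then - G2 q else 0)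
+ (if a < n \<and> b = 2*n \<and> c = 2*n then - G2 q * p a else 0)
+ (if b < n \<and> a = 2*n \<and> c = 2*n then - G2 q * p b else 0)
+ (if a < n \<and> b = 2*n+1 \<and> c = a then G3 q else 0)
+ (if b < n \<and> a = 2*n+1 \<and> c = b then G3 q else 0)
+ (if n \<le> a \<and> a < 2*n \<and> n \<le> b \<and> b < 2*n \<and> c < n then - G2 q * ((if c = a-n then p (b-n) else 0) + (if c = b-n then p (a-n) else 0)) else 0)
+ (if n \<le> a \<and> a < 2*n \<and> n \<le> b \<and> b < 2*n \<and> c = 2*n+1 then G1 q * (if a = b then 1 else 0) + G4 q * p (a-n) * p (b-n) else 0)
+ (if n \<le> a \<and> a < 2*n \<and> b = 2*n \<and> c = a - n then G2 q else 0)
+ (if n \<le> b \<and> b < 2*n \<and> a = 2*n \<and> c = b - n then G2 q else 0)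
+ (if n \<le> a \<and> a < 2*n \<and> b = 2*n \<and> c = 2*n+1 then - G4 q * p (a-n) else 0)
+ (if n \<le> b \<and> b < 2*n \<and> a = 2*n \<and> c = 2*n+1 then - G4 q * p (b-n) else 0)
+ (if a = 2*n \<and> b = 2*n \<and> c = 2*n+1 then G4 q else 0)
+ (if a = 2*n+1 \<and> b = 2*n+1 \<and> c = 2*n+1 then G6 q else 0)
+ (if a = 2*n+1 \<and> n \<le> b \<and> b < 2*n \<and> c = b then G3 q else 0)
+ (if b = 2*n+1 \<and> n \<le> a \<and> a < 2*n \<and> c = a then G3 q else 0)
+ (if a = 2*n+1 \<and> n \<le> b \<and> b < 2*n \<and> c = 2*n then (G3 q - G5 q) * p (b-n) else 0)
+ (if b = 2*n+1 \<and> n \<le> a \<and> a < 2*n \<and> c = 2*n then (G3 q - G5 q) * p (a-n) else 0)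
+ (if a = 2*n+1 \<and> b = 2*n \<and> c = 2*n then G5 q else 0)
+ (if b = 2*n+1 \<and> a = 2*n \<and> c = 2*n then G5 q else 0))"

lemma chr_sum:
  assumes q: "p (2*n+1) \<in> I" and c: "c < 2*n+2"
  shows "christoffel (2*n+2) (heis_metric n \<phi>) c a b p
     = (\<Sum>d<2*n+2. GI p c d * (DG p a b d + DG p b a d - DG p d a b)) / 2"
  unfolding christoffel_def
  apply (rule arg_cong[where f="\<lambda>x. x / 2"], rule sum.cong[OF refl])
  apply (subst inv_eq[of p c, OF q c])
   apply simp
  apply (simp add: dg_eq[of p, OF q])
  done

lemma chr_eq:
  assumes q: "p (2*n+1) \<in> I" and abc: "c < 2*n+2" "a < 2*n+2" "b < 2*n+2"
  shows "christoffel (2*n+2) (heis_metric n \<phi>) c a b p = GamC p c a b"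
proof -
  have P: "\<phi> (p (2*n+1)) > 0" "Af (p (2*n+1)) > 0" "Bf (p (2*n+1)) > 0"
    using q phi_pos Af_pos Bf_pos by auto
  show ?thesis
    unfolding chr_sum[of p c a b, OF q abc(1)] sum_split4
    apply (rule idx_cases[OF abc(1)]; rule idx_cases[OF abc(2)]; rule idx_cases[OF abc(3)])
    using P apply (simp_all add: DG_def zt_def dzt_def GI_def GamC_def Let_def sumnorm G1_def G2_def G3_def G4_def G5_def G6_def)
    using P apply (auto simp: field_simps sum_rc1 sum_rc2 SS_fold sum_distrib_left[symmetric])
    done
qed

end
context H begin

definition "m = n - 1"
definition "U t = \<phi> t ^ m"

lemma Af_U: "Af t = D1 t / U t" by (simp add: Af_def U_def m_def)
lemma Bf_U: "Bf t = U t * D1 t" by (simp add: Bf_def U_def m_def)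
lemma U_pos: "t \<in> I \<Longrightarrow> U t > 0" using phi_pos by (simp add: U_def)

lemma DERIV_phi: "t \<in> I \<Longrightarrow> (\<phi> has_real_derivative D1 t) (at t)"
  using diff_phi[of t] by (simp add: D1_def DERIV_deriv_iff_field_differentiable)
lemma DERIV_D1: "t \<in> I \<Longrightarrow> (D1 has_real_derivative D2 t) (at t)"
  using diff_D1[of t] by (simp add: D2_def DERIV_deriv_iff_field_differentiable)
lemma DERIV_D2: "t \<in> I \<Longrightarrow> (D2 has_real_derivative D3 t) (at t)"
  using diff_D2[of t] by (simp add: D3_def DERIV_deriv_iff_field_differentiable)

lemma DERIV_U: "t \<in> I \<Longrightarrow> (U has_real_derivative (real m * U t * D1 t / \<phi> t)) (at t)"
proof -
  assume t: "t \<in> I"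
  have "((\<lambda>t. \<phi> t ^ m) has_real_derivative (real m * \<phi> t ^ (m - 1) * D1 t)) (at t)"
    by (auto intro!: derivative_eq_intros DERIV_phi[OF t])
  moreover have "real m * \<phi> t ^ (m - 1) * D1 t = real m * U t * D1 t / \<phi> t"
  proof (cases m)
    case 0 then show ?thesis by simp
  next
    case (Suc k) then show ?thesis using phi_pos[OF t] by (simp add: U_def)
  qed
  ultimately show ?thesis by (simp add: U_def[abs_def])
qed

definition "Ud t = real m * U t * D1 t / \<phi> t"
definition "Ad t = D2 t / U t - real m * D1 t ^ 2 / (U t * \<phi> t)"
definition "Bd t = real m * U t * D1 t ^ 2 / \<phi> t + U t * D2 t"

lemma DERIV_Af: "t \<in> I \<Longrightarrow> (Af has_real_derivative Ad t) (at t)"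
proof -
  assume t: "t \<in> I"
  note P = phi_pos[OF t] U_pos[OF t]
  have "((\<lambda>t. D1 t / U t) has_real_derivative (D2 t * U t - D1 t * (real m * U t * D1 t / \<phi> t)) / (U t * U t)) (at t)"
    using P by (auto intro!: derivative_eq_intros DERIV_D1[OF t] DERIV_U[OF t])
  moreover have "(D2 t * U t - D1 t * (real m * U t * D1 t / \<phi> t)) / (U t * U t) = Ad t"
    using P by (simp add: Ad_def field_simps power2_eq_square)
  ultimately show ?thesis by (simp add: Af_U[abs_def])
qed

lemma DERIV_Bf: "t \<in> I \<Longrightarrow> (Bf has_real_derivative Bd t) (at t)"
proof -
  assume t: "t \<in> I"
  note P = phi_pos[OF t] U_pos[OF t]
  have "((\<lambda>t. U t * D1 t) has_real_derivative (U t * D2 t + (real m * U t * D1 t / \<phi> t) * D1 t)) (at t)"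
    by (auto intro!: derivative_eq_intros DERIV_D1[OF t] DERIV_U[OF t])
  moreover have "U t * D2 t + (real m * U t * D1 t / \<phi> t) * D1 t = Bd t"
    using P by (simp add: Bd_def field_simps power2_eq_square)
  ultimately show ?thesis by (simp add: Bf_U[abs_def])
qed

lemma dAf: "t \<in> I \<Longrightarrow> deriv Af t = Ad t" using DERIV_Af DERIV_imp_deriv by blast
lemma dBf: "t \<in> I \<Longrightarrow> deriv Bf t = Bd t" using DERIV_Bf DERIV_imp_deriv by blast

definition "Add t = D3 t / U t - D2 t * Ud t / (U t)^2
   - real m * (2 * D1 t * D2 t * (U t * \<phi> t) - D1 t ^ 2 * (Ud t * \<phi> t + U t * D1 t)) / (U t * \<phi> t)^2"
definition "Bdd t = real m * ((Ud t * D1 t ^ 2 + U t * (2 * D1 t * D2 t)) * \<phi> t - U t * D1 t ^ 2 * D1 t) / \<phi> t ^ 2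
   + Ud t * D2 t + U t * D3 t"

lemma DERIV_Ad: "t \<in> I \<Longrightarrow> (Ad has_real_derivative Add t) (at t)"
proof -
  assume t: "t \<in> I"
  note P = phi_pos[OF t] U_pos[OF t]
  have "((\<lambda>t. D2 t / U t - real m * D1 t ^ 2 / (U t * \<phi> t)) has_real_derivative Add t) (at t)"
    unfolding Add_def Ud_def
    using P by (auto intro!: derivative_eq_intros DERIV_D1[OF t] DERIV_D2[OF t] DERIV_U[OF t] DERIV_phi[OF t]
       simp: field_simps power2_eq_square)
  then show ?thesis by (simp add: Ad_def[abs_def])
qed


lemma DERIV_Bd: "t \<in> I \<Longrightarrow> (Bd has_real_derivative Bdd t) (at t)"
proof -
  assume t: "t \<in> I"
  note P = phi_pos[OF t] U_pos[OF t]
  have "((\<lambda>t. real m * U t * D1 t ^ 2 / \<phi> t + U t * D2 t) has_real_derivative Bdd t) (at t)"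
    unfolding Bdd_def Ud_def
    using P by (auto intro!: derivative_eq_intros DERIV_D1[OF t] DERIV_D2[OF t] DERIV_U[OF t] DERIV_phi[OF t]
       simp: field_simps power2_eq_square)
  then show ?thesis by (simp add: Bd_def[abs_def])
qed

lemma Bf_pos': "t \<in> I \<Longrightarrow> Bf t > 0" by (rule Bf_pos)

definition "dG1 t = -(D2 t * Bf t - D1 t * Bd t) / (2 * Bf t ^ 2)"
definition "dG2 t = (Ad t * \<phi> t - Af t * D1 t) / (2 * \<phi> t ^ 2)"
definition "dG3 t = (D2 t * \<phi> t - D1 t * D1 t) / (2 * \<phi> t ^ 2)"
definition "dG4 t = -(Add t * Bf t - Ad t * Bd t) / (2 * Bf t ^ 2)"
definition "dG5 t = (Add t * Af t - Ad t * Ad t) / (2 * Af t ^ 2)"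
definition "dG6 t = (Bdd t * Bf t - Bd t * Bd t) / (2 * Bf t ^ 2)"

lemma DERIV_G1: "t \<in> I \<Longrightarrow> (G1 has_real_derivative dG1 t) (at t)"
proof -
  assume t: "t \<in> I"
  note P = phi_pos[OF t] Bf_pos[OF t]
  show ?thesis unfolding G1_def[abs_def] dG1_def
    using P by (auto intro!: derivative_eq_intros DERIV_D1[OF t] DERIV_Bf[OF t] simp: field_simps power2_eq_square)
qed
lemma DERIV_G2: "t \<in> I \<Longrightarrow> (G2 has_real_derivative dG2 t) (at t)"
proof -
  assume t: "t \<in> I"
  note P = phi_pos[OF t] Bf_pos[OF t]
  show ?thesis unfolding G2_def[abs_def] dG2_def
    using P by (auto intro!: derivative_eq_intros DERIV_phi[OF t] DERIV_Af[OF t] simp: field_simps power2_eq_square)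
qed
lemma DERIV_G3: "t \<in> I \<Longrightarrow> (G3 has_real_derivative dG3 t) (at t)"
proof -
  assume t: "t \<in> I"
  note P = phi_pos[OF t] Bf_pos[OF t]
  show ?thesis unfolding G3_def[abs_def] dG3_def
    using P by (auto intro!: derivative_eq_intros DERIV_phi[OF t] DERIV_D1[OF t] simp: field_simps power2_eq_square)
qed
lemma DERIV_G4: "t \<in> I \<Longrightarrow> (G4 has_real_derivative dG4 t) (at t)"
proof -
  assume t: "t \<in> I"
  note P = phi_pos[OF t] Bf_pos[OF t]
  have "((\<lambda>t. - Ad t / (2 * Bf t)) has_real_derivative dG4 t) (at t)"
    unfolding dG4_def
    using P by (auto intro!: derivative_eq_intros DERIV_Ad[OF t] DERIV_Bf[OF t] simp: field_simps power2_eq_square)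
  then show ?thesis
    by (rule has_field_derivative_transform_within_open[OF _ oI t]) (simp add: G4_def dAf)
qed
lemma DERIV_G5: "t \<in> I \<Longrightarrow> (G5 has_real_derivative dG5 t) (at t)"
proof -
  assume t: "t \<in> I"
  note P = phi_pos[OF t] Af_pos[OF t]
  have "((\<lambda>t. Ad t / (2 * Af t)) has_real_derivative dG5 t) (at t)"
    unfolding dG5_def
    using P by (auto intro!: derivative_eq_intros DERIV_Ad[OF t] DERIV_Af[OF t] simp: field_simps power2_eq_square)
  then show ?thesis
    by (rule has_field_derivative_transform_within_open[OF _ oI t]) (simp add: G5_def dAf)
qed
lemma DERIV_G6: "t \<in> I \<Longrightarrow> (G6 has_real_derivative dG6 t) (at t)"
proof -
  assume t: "t \<in> I"
  note P = phi_pos[OF t] Bf_pos[OF t]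
  have "((\<lambda>t. Bd t / (2 * Bf t)) has_real_derivative dG6 t) (at t)"
    unfolding dG6_def
    using P by (auto intro!: derivative_eq_intros DERIV_Bd[OF t] DERIV_Bf[OF t] simp: field_simps power2_eq_square)
  then show ?thesis
    by (rule has_field_derivative_transform_within_open[OF _ oI t]) (simp add: G6_def dBf)
qed

lemma fd_of_DERIV: "(f has_real_derivative D) (at t) \<Longrightarrow> f field_differentiable (at t)"
  unfolding field_differentiable_def by blast

lemmas DERIV_Gs = DERIV_G1 DERIV_G2 DERIV_G3 DERIV_G4 DERIV_G5 DERIV_G6
lemmas diff_Gs = DERIV_Gs[THEN fd_of_DERIV]
lemmas deriv_Gs = DERIV_Gs[THEN DERIV_imp_deriv]


lemma ric_sum:
  assumes q: "p (2*n+1) \<in> I" and bc: "b < 2*n+2" "c < 2*n+2"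
  shows "ricci (2*n+2) (heis_metric n \<phi>) p b c =
     (\<Sum>a<2*n+2. pd a (\<lambda>x. GamC x a b c) p) - (\<Sum>a<2*n+2. pd c (\<lambda>x. GamC x a a b) p)
   + (\<Sum>a<2*n+2. \<Sum>d<2*n+2. GamC p a a d * GamC p d b c - GamC p a c d * GamC p d a b)"
proof -
  have A: "(\<Sum>a<2*n+2. pd a (\<lambda>x. christoffel (2*n+2) (heis_metric n \<phi>) a b c x) p) = (\<Sum>a<2*n+2. pd a (\<lambda>x. GamC x a b c) p)"
    by (rule sum.cong[OF refl], rule pd_local[of I p "2*n+1", OF oI q]) (use bc chr_eq in auto)
  have B: "(\<Sum>a<2*n+2. pd c (\<lambda>x. christoffel (2*n+2) (heis_metric n \<phi>) a a b x) p) = (\<Sum>a<2*n+2. pd c (\<lambda>x. GamC x a a b) p)"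
    by (rule sum.cong[OF refl], rule pd_local[of I p "2*n+1", OF oI q]) (use bc chr_eq in auto)
  have C: "(\<Sum>a<2*n+2. \<Sum>d<2*n+2. christoffel (2*n+2) (heis_metric n \<phi>) a a d p * christoffel (2*n+2) (heis_metric n \<phi>) d b c p -
        christoffel (2*n+2) (heis_metric n \<phi>) a c d p * christoffel (2*n+2) (heis_metric n \<phi>) d a b p)
     = (\<Sum>a<2*n+2. \<Sum>d<2*n+2. GamC p a a d * GamC p d b c - GamC p a c d * GamC p d a b)"
    by (intro sum.cong refl) (simp only: lessThan_iff chr_eq[of p, OF q] bc)
  show ?thesis unfolding ricci_def A B C ..
qed

lemma pd_f: "x (2*n+1) \<in> I \<Longrightarrow> pd b (\<lambda>x. k * \<phi> (qc n x)) x = (if b = 2*n+1 then k * D1 (x (2*n+1)) else 0)"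
  unfolding qc_def using diff_phi[of "x (2*n+1)"] by (simp add: dd_qfun pd_qfun D1_def)

lemma hess_eq:
  assumes q: "p (2*n+1) \<in> I" and ab: "a < 2*n+2" "b < 2*n+2"
  shows "hessian (2*n+2) (heis_metric n \<phi>) (\<lambda>x. k * \<phi> (qc n x)) p a b
     = (if a = 2*n+1 \<and> b = 2*n+1 then k * D2 (p (2*n+1)) else 0) - GamC p (2*n+1) a b * (k * D1 (p (2*n+1)))"
proof -
  have 1: "pd a (\<lambda>x. pd b (\<lambda>x. k * \<phi> (qc n x)) x) p = pd a (\<lambda>x. if b = 2*n+1 then k * D1 (x (2*n+1)) else 0) p"
    by (rule pd_local[of I p "2*n+1", OF oI q]) (simp add: pd_f)
  have 2: "pd a (\<lambda>x. if b = 2*n+1 then k * D1 (x (2*n+1)) else 0) p = (if a = 2*n+1 \<and> b = 2*n+1 then k * D2 (p (2*n+1)) else 0)"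
    using diff_D1[OF q] by (simp add: dd_qfun pd_qfun D2_def)
  have 3: "(\<Sum>c<2*n+2. christoffel (2*n+2) (heis_metric n \<phi>) c a b p * pd c (\<lambda>x. k * \<phi> (qc n x)) p)
     = (\<Sum>c<2*n+2. (if c = 2*n+1 then GamC p (2*n+1) a b * (k * D1 (p (2*n+1))) else 0))"
  proof (rule sum.cong[OF refl])
    fix c assume "c \<in> {..<2*n+2}"
    then have "christoffel (2*n+2) (heis_metric n \<phi>) c a b p = GamC p c a b"
      by (intro chr_eq[of p, OF q] ab) simp
    then show "christoffel (2*n+2) (heis_metric n \<phi>) c a b p * pd c (\<lambda>x. k * \<phi> (qc n x)) p
       = (if c = 2*n+1 then GamC p (2*n+1) a b * (k * D1 (p (2*n+1))) else 0)"
      by (simp add: pd_f[of p, OF q])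
  qed
  show ?thesis unfolding hessian_def 1 2 3 by simp
qed


lemma m_real: "real m = real n - 1" using n1 by (simp add: m_def of_nat_diff)
lemma phi_n: "\<phi> t ^ n = \<phi> t * U t" using n1 by (simp add: U_def m_def power_Suc[symmetric])

end

locale HO = H +
  fixes lam k :: real
  assumes ode: "\<forall>q\<in>I. deriv (deriv (\<lambda>t. (\<phi> t)\<^sup>2)) q / deriv (\<lambda>t. (\<phi> t)\<^sup>2) q
                 = - 2 * lam * \<phi> q ^ n + k * deriv \<phi> q"
begin

lemma DERIV_sq: "t \<in> I \<Longrightarrow> ((\<lambda>t. (\<phi> t)\<^sup>2) has_real_derivative 2 * \<phi> t * D1 t) (at t)"
  by (auto intro!: derivative_eq_intros DERIV_phi)

lemma d_sq: "t \<in> I \<Longrightarrow> deriv (\<lambda>t. (\<phi> t)\<^sup>2) t = 2 * \<phi> t * D1 t"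
  using DERIV_sq DERIV_imp_deriv by blast

lemma dd_sq: "t \<in> I \<Longrightarrow> deriv (deriv (\<lambda>t. (\<phi> t)\<^sup>2)) t = 2 * D1 t * D1 t + 2 * \<phi> t * D2 t"
proof -
  assume t: "t \<in> I"
  have "((\<lambda>t. 2 * \<phi> t * D1 t) has_real_derivative 2 * D1 t * D1 t + 2 * \<phi> t * D2 t) (at t)"
    by (auto intro!: derivative_eq_intros DERIV_phi[OF t] DERIV_D1[OF t] simp: algebra_simps)
  then have "(deriv (\<lambda>t. (\<phi> t)\<^sup>2) has_real_derivative 2 * D1 t * D1 t + 2 * \<phi> t * D2 t) (at t)"
    by (rule has_field_derivative_transform_within_open[OF _ oI t]) (simp add: d_sq)
  then show ?thesis using DERIV_imp_deriv by blast
qed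

definition "E2 t = D1 t * (- 2 * lam * \<phi> t * U t + k * D1 t) - D1 t ^ 2 / \<phi> t"

lemma D2_eq: "t \<in> I \<Longrightarrow> D2 t = E2 t"
proof -
  assume t: "t \<in> I"
  note P = phi_pos[OF t] D1_pos[OF t]
  have "(2 * D1 t * D1 t + 2 * \<phi> t * D2 t) / (2 * \<phi> t * D1 t) = - 2 * lam * (\<phi> t * U t) + k * D1 t"
    using ode t by (simp add: dd_sq d_sq phi_n D1_def)
  then show ?thesis using P by (simp add: E2_def field_simps power2_eq_square)
qed

definition "E3 t = D2 t * (- 2 * lam * \<phi> t * U t + k * D1 t)
   + D1 t * (- 2 * lam * (D1 t * U t + \<phi> t * Ud t) + k * D2 t)
   - (2 * D1 t * D2 t * \<phi> t - D1 t ^ 2 * D1 t) / \<phi> t ^ 2"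

lemma D3_eq: "t \<in> I \<Longrightarrow> D3 t = E3 t"
proof -
  assume t: "t \<in> I"
  note P = phi_pos[OF t] D1_pos[OF t]
  have "(E2 has_real_derivative E3 t) (at t)"
    unfolding E2_def[abs_def] E3_def Ud_def
    using P by (auto intro!: derivative_eq_intros DERIV_phi[OF t] DERIV_D1[OF t] DERIV_U[OF t]
       simp: field_simps power2_eq_square)
  then have "(D2 has_real_derivative E3 t) (at t)"
    by (rule has_field_derivative_transform_within_open[OF _ oI t]) (simp add: D2_eq)
  then show ?thesis using DERIV_D2[OF t] DERIV_unique by blast
qed

lemma EX: "t \<in> I \<Longrightarrow> deriv G1 t = lam * \<phi> t - (2 * real n * G3 t * G1 t + G5 t * G1 t + G6 t * G1 t - G2 t - 2 * G3 t * G1 t - G1 t * (k * D1 t))"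
proof -
  assume t: "t \<in> I"
  note P = phi_pos[OF t] D1_pos[OF t] U_pos[OF t]
  show ?thesis
    using P unfolding deriv_Gs[OF t] G1_def G2_def G3_def G5_def G6_def dG1_def dAf[OF t] dBf[OF t]
    by (simp add: Ad_def Add_def Bd_def Bdd_def Ud_def Af_U Bf_U D3_eq[OF t] E3_def D2_eq[OF t] E2_def m_real field_simps power2_eq_square)
qed


lemma EZ: "t \<in> I \<Longrightarrow> deriv G4 t = lam * Af t - (2 * real n * G2 t * G2 t + 2 * real n * G3 t * G4 t + G6 t * G4 t - G4 t * G5 t - G4 t * (k * D1 t))"
proof -
  assume t: "t \<in> I"
  note P = phi_pos[OF t] D1_pos[OF t] U_pos[OF t]
  show ?thesis
    using P unfolding deriv_Gs[OF t] G2_def G3_def G4_def G5_def G6_def dG4_def dAf[OF t] dBf[OF t]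
    by (simp add: Ad_def Add_def Bd_def Bdd_def Ud_def Af_U Bf_U D3_eq[OF t] E3_def D2_eq[OF t] E2_def m_real field_simps power2_eq_square)
qed

lemma EQ: "t \<in> I \<Longrightarrow> deriv G5 t = - 2 * real n * deriv G3 t + 2 * real n * G3 t * G6 t - 2 * real n * G3 t * G3 t
   + G5 t * G6 t - G5 t * G5 t + k * D2 t - G6 t * (k * D1 t) - lam * Bf t"
proof -
  assume t: "t \<in> I"
  note P = phi_pos[OF t] D1_pos[OF t] U_pos[OF t]
  show ?thesis
    using P unfolding deriv_Gs[OF t] G3_def G5_def G6_def dG3_def dG5_def dAf[OF t] dBf[OF t]
    by (simp add: Ad_def Add_def Bd_def Bdd_def Ud_def Af_U Bf_U D3_eq[OF t] E3_def D2_eq[OF t] E2_def m_real field_simps power2_eq_square)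
qed


end

context H begin

lemma pair_dvec: "pair N \<theta> (dvec b) = (if b < N then \<theta> b else 0)"
  unfolding pair_def dvec_def by (simp add: ifm2 sum.delta')

definition "Ui t = 1 / U t"

definition "JC p c b = (if b < n then (if c = n+b then 1 else 0) + p b * (if c = 2*n then 1 else 0) else 0)
 - (if n \<le> b \<and> b < 2*n then (if c = b - n then 1 else 0) else 0)
 - zt p b * Ui (p (2*n+1)) * (if c = 2*n+1 then 1 else 0)
 - (if b = 2*n+1 then U (p (2*n+1)) * (if c = 2*n then 1 else 0) else (0::real))"

lemma J_eq: assumes b: "b < 2*n+2" shows "heis_J n \<phi> p c b = JC p c b"
proof -
  have 1: "(\<Sum>i<n. pair (2*n+2) (sigma_h i) (dvec b) * Y_h n p i c - pair (2*n+2) (rho_h n i) (dvec b) * X_h i c)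
    = (\<Sum>i<n. (if i = b then (if c = n+b then 1 else 0) + p b * (if c = 2*n then 1 else 0) else 0)
              - (if b = n + i then (if c = i then 1 else 0) else 0))"
    by (rule sum.cong[OF refl]) (use b in \<open>simp add: pair_dvec sigma_h_def rho_h_def dvec_def Y_h_def X_h_def\<close>)
  have 2: "(\<Sum>i<n. (if i = b then (if c = n+b then 1 else 0) + p b * (if c = 2*n then 1 else 0) else 0)
              - (if b = n + i then (if c = i then 1 else 0) else (0::real)))
     = (if b < n then (if c = n+b then 1 else 0) + p b * (if c = 2*n then 1 else 0) else 0)
     - (if n \<le> b \<and> b < 2*n then (if c = b - n then 1 else 0) else 0)"
  proof -
    have "(\<Sum>i<n. (if b = n + i then (if c = i then 1 else 0) else (0::real))) = (\<Sum>i<n. if i = b - n then (if n \<le> b \<and> c = i then 1 else 0) else 0)"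
      by (rule sum.cong[OF refl]) auto
    also have "\<dots> = (if n \<le> b \<and> b < 2*n then (if c = b - n then 1 else 0) else 0)"
      by (simp add: sum.delta) linarith
    finally show ?thesis by (simp add: sum_subtractf sum.delta')
  qed
  show ?thesis
    unfolding heis_J_def Let_def 1 2
    using b by (simp add: pair_dvec JC_def Ui_def zeta_eq dq_h_def dvec_def dqv_h_def Z_h_def U_def m_def qc_def)
qed


lemma UiU: "t \<in> I \<Longrightarrow> Ui t * U t = 1" "t \<in> I \<Longrightarrow> U t * Ui t = 1"
  "t \<in> I \<Longrightarrow> Ui t * (U t * x) = x" "t \<in> I \<Longrightarrow> U t * (Ui t * x) = x"
  using U_pos[of t] by (auto simp: Ui_def)

lemma J_sum_eq:
  assumes "\<And>c. c < 2*n+2 \<Longrightarrow> F c = G c"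
  shows "(\<Sum>c<2*n+2. F c) = (\<Sum>c<2*n+2. G c)"
  using assms by (intro sum.cong) auto

lemma J2:
  assumes q: "p (2*n+1) \<in> I" and ab: "a < 2*n+2" "b < 2*n+2"
  shows "(\<Sum>c<2*n+2. heis_J n \<phi> p a c * heis_J n \<phi> p c b) = (if a = b then -1 else 0)"
proof -
  have P: "U (p (2*n+1)) > 0" "p (Suc (2*n)) \<in> I" using U_pos q by auto
  have "(\<Sum>c<2*n+2. heis_J n \<phi> p a c * heis_J n \<phi> p c b) = (\<Sum>c<2*n+2. JC p a c * JC p c b)"
    by (rule J_sum_eq) (use ab in \<open>simp add: J_eq\<close>)
  also have "\<dots> = (if a = b then -1 else 0)"
    unfolding sum_split4
    apply (rule idx_cases[OF ab(1)]; rule idx_cases[OF ab(2)])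
    using P apply (simp_all add: JC_def zt_def sumnorm UiU)
    done
  finally show ?thesis .
qed

lemma JgJ:
  assumes q: "p (2*n+1) \<in> I" and ab: "a < 2*n+2" "b < 2*n+2"
  shows "(\<Sum>c<2*n+2. \<Sum>d<2*n+2. heis_J n \<phi> p c a * heis_J n \<phi> p d b * heis_metric n \<phi> p c d) = heis_metric n \<phi> p a b"
proof -
  have P: "U (p (2*n+1)) > 0" "p (Suc (2*n)) \<in> I" using U_pos q by auto
  have "(\<Sum>c<2*n+2. \<Sum>d<2*n+2. heis_J n \<phi> p c a * heis_J n \<phi> p d b * heis_metric n \<phi> p c d)
      = (\<Sum>c<2*n+2. \<Sum>d<2*n+2. JC p c a * JC p d b * heis_metric n \<phi> p c d)"
    by (use ab in \<open>simp add: J_eq\<close>)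
  also have "\<dots> = heis_metric n \<phi> p a b"
    unfolding sum_split4 g_eq
    apply (rule idx_cases[OF ab(1)]; rule idx_cases[OF ab(2)])
    using P apply (simp_all add: JC_def zt_def sumnorm Af_U Bf_U UiU)
    using P apply (auto simp: Ui_def)
    done
  finally show ?thesis .
qed

lemma kform:
  assumes q: "p (2*n+1) \<in> I" and ab: "a < 2*n+2" "b < 2*n+2"
  shows "kaehler_form (2*n+2) (heis_metric n \<phi>) (heis_J n \<phi>) p a b
              = ext_d (\<lambda>x c. \<phi> (qc n x) * zeta_h n x c) p a b"
proof -
  have P: "U (p (2*n+1)) > 0" "p (Suc (2*n)) \<in> I" using U_pos q by auto
  have "kaehler_form (2*n+2) (heis_metric n \<phi>) (heis_J n \<phi>) p a b = (\<Sum>c<2*n+2. JC p c a * heis_metric n \<phi> p c b)"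
    unfolding kaehler_form_def by (use ab in \<open>simp add: J_eq\<close>)
  also have "\<dots> = ext_d (\<lambda>x c. \<phi> (qc n x) * zeta_h n x c) p a b"
    unfolding sum_split4 g_eq ext_d_def zeta_eq qc_def
    apply (rule idx_cases[OF ab(1)]; rule idx_cases[OF ab(2)])
    using P apply (simp_all add: JC_def zt_def sumnorm Af_U Bf_U UiU dd_qfun pd_qfun diffs D1_def cong: if_cong)
    done
  finally show ?thesis .
qed


lemma diff_U: "t \<in> I \<Longrightarrow> U field_differentiable (at t)"
  using DERIV_U fd_of_DERIV by blast
lemma deriv_U: "t \<in> I \<Longrightarrow> deriv U t = Ud t"
  by (simp add: Ud_def DERIV_imp_deriv[OF DERIV_U])

lemma DERIV_Ui: "t \<in> I \<Longrightarrow> (Ui has_real_derivative - Ud t / (U t)^2) (at t)"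
proof -
  assume t: "t \<in> I"
  have "((\<lambda>t. 1 / U t) has_real_derivative - Ud t / (U t)^2) (at t)"
    using U_pos[OF t] DERIV_U[OF t]
    by (auto intro!: derivative_eq_intros simp: Ud_def field_simps power2_eq_square)
  then show ?thesis by (simp add: Ui_def[abs_def])
qed
lemma diff_Ui: "t \<in> I \<Longrightarrow> Ui field_differentiable (at t)"
  using DERIV_Ui fd_of_DERIV by blast
lemma deriv_Ui: "t \<in> I \<Longrightarrow> deriv Ui t = - Ud t / (U t)^2"
  using DERIV_Ui DERIV_imp_deriv by blast

lemma chr_eqS: "p (Suc (2*n)) \<in> I \<Longrightarrow> c < Suc (Suc (2*n)) \<Longrightarrow> a < Suc (Suc (2*n)) \<Longrightarrow> b < Suc (Suc (2*n))
   \<Longrightarrow> christoffel (Suc (Suc (2*n))) (heis_metric n \<phi>) c a b p = GamC p c a b"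
  using chr_eq[of p c a b] by simp

lemma nablaJ:
  assumes q: "p (2*n+1) \<in> I" and abc: "a < 2*n+2" "c < 2*n+2" "b < 2*n+2"
  shows "nabla_J (2*n+2) (heis_metric n \<phi>) (heis_J n \<phi>) a c b p = 0"
proof -
  have P: "U (p (2*n+1)) > 0" "p (Suc (2*n)) \<in> I" "U (p (Suc (2*n))) > 0" "\<phi> (p (Suc (2*n))) > 0"
    "D1 (p (Suc (2*n))) > 0"
    using U_pos q phi_pos D1_pos by auto
  have "nabla_J (2*n+2) (heis_metric n \<phi>) (heis_J n \<phi>) a c b p
     = pd a (\<lambda>x. JC x c b) p + (\<Sum>d<2*n+2. GamC p c a d * JC p d b) - (\<Sum>d<2*n+2. GamC p d a b * JC p c d)"
    unfolding nabla_J_def using abc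
    using P(2) by (simp add: J_eq chr_eqS)
  also have "\<dots> = 0"
    unfolding sum_split4
    apply (rule idx_cases[OF abc(1)]; rule idx_cases[OF abc(2)]; rule idx_cases[OF abc(3)])
    using P apply (simp_all add: JC_def zt_def GamC_def Let_def sumnorm dd_qfun pd_qfun diff_U deriv_U diff_Ui deriv_Ui cong: if_cong)
    using P apply (auto simp: G1_def G2_def G3_def G4_def G5_def G6_def Af_U Bf_U Ui_def Ud_def dAf dBf Ad_def Bd_def field_simps power2_eq_square)
    done
  finally show ?thesis .
qed


lemma quad_form:
  fixes v p :: "nat \<Rightarrow> real"
  defines "Z \<equiv> (\<Sum>b<2*n+2. zt p b * v b)"
  shows "(\<Sum>a<2*n+2. \<Sum>b<2*n+2. heis_metric n \<phi> p a b * v a * v b)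
     = \<phi> (p (2*n+1)) * (\<Sum>a<2*n. v a * v a) + Af (p (2*n+1)) * (Z * Z) + Bf (p (2*n+1)) * (v (2*n+1) * v (2*n+1))"
proof -
  have row: "(\<Sum>b<2*n+2. heis_metric n \<phi> p a b * v a * v b)
      = \<phi> (p (2*n+1)) * (if a < 2*n then v a * v a else 0) + Af (p (2*n+1)) * (zt p a * v a * Z)
        + Bf (p (2*n+1)) * (if a = 2*n+1 then v a * v a else 0)" for a
  proof -
    have "(\<Sum>b<2*n+2. heis_metric n \<phi> p a b * v a * v b)
      = (\<Sum>b<2*n+2. (if b = a then \<phi> (p (2*n+1)) * (if a < 2*n then v a * v a else 0) else 0)
          + Af (p (2*n+1)) * (zt p a * v a) * (zt p b * v b)
          + (if b = a then Bf (p (2*n+1)) * (if a = 2*n+1 then v a * v a else 0) else 0))"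
      by (rule sum.cong[OF refl]) (auto simp: g_eq algebra_simps)
    also have "\<dots> = (if a < 2*n+2 then \<phi> (p (2*n+1)) * (if a < 2*n then v a * v a else 0) else 0)
        + Af (p (2*n+1)) * (zt p a * v a) * Z
        + (if a < 2*n+2 then Bf (p (2*n+1)) * (if a = 2*n+1 then v a * v a else 0) else 0)"
      by (simp add: sum.distrib sum.delta Z_def sum_distrib_left del: sum.lessThan_Suc)
    also have "\<dots> = \<phi> (p (2*n+1)) * (if a < 2*n then v a * v a else 0) + Af (p (2*n+1)) * (zt p a * v a * Z)
        + Bf (p (2*n+1)) * (if a = 2*n+1 then v a * v a else 0)"
      by auto
    finally show ?thesis .
  qed
  have "(\<Sum>a<2*n+2. \<Sum>b<2*n+2. heis_metric n \<phi> p a b * v a * v b)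
     = \<phi> (p (2*n+1)) * (\<Sum>a<2*n+2. if a < 2*n then v a * v a else 0) + Af (p (2*n+1)) * ((\<Sum>a<2*n+2. zt p a * v a) * Z)
       + Bf (p (2*n+1)) * (\<Sum>a<2*n+2. if a = 2*n+1 then v a * v a else 0)"
    unfolding row by (simp add: sum.distrib sum_distrib_left sum_distrib_right mult.assoc ifm1 ifm2 sum.delta sum.delta' del: sum.lessThan_Suc)
  also have "(\<Sum>a<2*n+2. if a < 2*n then v a * v a else 0) = (\<Sum>a<2*n. v a * v a)"
    by simp
  also have "(\<Sum>a<2*n+2. if a = 2*n+1 then v a * v a else 0) = v (2*n+1) * v (2*n+1)"
    by (simp add: sum.delta')
  finally show ?thesis unfolding Z_def by simp
qed


lemma posdef:
  fixes v :: "nat \<Rightarrow> real"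
  assumes q: "p (2*n+1) \<in> I" and ex: "\<exists>a<2*n+2. v a \<noteq> 0"
  shows "(\<Sum>a<2*n+2. \<Sum>b<2*n+2. heis_metric n \<phi> p a b * v a * v b) > 0"
proof -
  define Z where "Z = (\<Sum>b<2*n+2. zt p b * v b)"
  define S where "S = (\<Sum>a<2*n. v a * v a)"
  have P: "\<phi> (p (2*n+1)) > 0" "Af (p (2*n+1)) > 0" "Bf (p (2*n+1)) > 0"
    using q phi_pos Af_pos Bf_pos by auto
  have S0: "S \<ge> 0" unfolding S_def by (intro sum_nonneg) simp
  have QF: "(\<Sum>a<2*n+2. \<Sum>b<2*n+2. heis_metric n \<phi> p a b * v a * v b)
     = \<phi> (p (2*n+1)) * S + Af (p (2*n+1)) * (Z * Z) + Bf (p (2*n+1)) * (v (2*n+1) * v (2*n+1))"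
    unfolding quad_form Z_def S_def ..
  have t1: "\<phi> (p (2*n+1)) * S \<ge> 0" using P S0 by simp
  have t2: "Af (p (2*n+1)) * (Z * Z) \<ge> 0" using P by simp
  have t3: "Bf (p (2*n+1)) * (v (2*n+1) * v (2*n+1)) \<ge> 0" using P by simp
  consider "S > 0" | "v (2*n+1) \<noteq> 0" | "S = 0" "v (2*n+1) = 0" using S0 by linarith
  then show ?thesis
  proof cases
    case 1 then have "\<phi> (p (2*n+1)) * S > 0" using P by simp
    then show ?thesis unfolding QF using t2 t3 by linarith
  next
    case 2 then have "Bf (p (2*n+1)) * (v (2*n+1) * v (2*n+1)) > 0" using P by (simp add: zero_less_mult_iff) linarith
    then show ?thesis unfolding QF using t1 t2 by linarith
  next
    case 3
    have v0: "\<forall>a<2*n. v a = 0"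
      using 3(1) unfolding S_def by (subst (asm) sum_nonneg_eq_0_iff) auto
    obtain a where a: "a < 2*n+2" "v a \<noteq> 0" using ex by blast
    have a2: "a = 2*n"
    proof (rule ccontr)
      assume na: "a \<noteq> 2*n"
      then have "a < 2*n \<or> a = 2*n+1" using a(1) by linarith
      then show False using a(2) v0 3(2) by auto
    qed
    have "Z = (\<Sum>b<2*n. zt p b * v b) + zt p (2*n) * v (2*n) + zt p (2*n+1) * v (2*n+1)"
      unfolding Z_def by simp
    also have "(\<Sum>b<2*n. zt p b * v b) = 0" using v0 by simp
    finally have "Z = - v (2*n)" using 3(2) by (simp add: zt_def)
    then have "Z * Z > 0" using a a2 by (metis not_real_square_gt_zero neg_equal_0_iff_equal)
    then have "Af (p (2*n+1)) * (Z * Z) > 0" using P by simp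
    then show ?thesis unfolding QF using t1 t3 by linarith
  qed
qed

end

lemma (in HO) sol_raw:
  assumes q: "p (2*n+1) \<in> I" and bc: "b < 2*n+2" "c < 2*n+2"
  shows "ricci (2*n+2) (heis_metric n \<phi>) p b c
              + hessian (2*n+2) (heis_metric n \<phi>) (\<lambda>x. k * \<phi> (qc n x)) p b c
              = lam * heis_metric n \<phi> p b c"
proof -
  have q': "p (Suc (2*n)) \<in> I" using q by simp
  show ?thesis
  unfolding ric_sum[of p, OF q bc] hess_eq[of p, OF q bc] sum_split4 g_eq
  apply (rule idx_cases[OF bc(1)]; rule idx_cases[OF bc(2)])
  using q' apply (simp_all add: GamC_def Let_def dd_qfun pd_qfun diff_Gs sumnorm zt_def cong: if_cong)
  using q' apply (simp_all add: EX EZ EQ algebra_simps)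
  done
qed


theorem mainTheorem4:
  fixes n :: nat and lam k :: real and \<phi> :: "real \<Rightarrow> real" and I :: "real set"
  assumes "n \<ge> 1"
    and "open I" and "is_interval I" and "I \<noteq> {}"
    and "smooth_on I \<phi>"
    and "\<forall>q\<in>I. \<phi> q > 0 \<and> deriv \<phi> q > 0"
    and "\<forall>q\<in>I. deriv (deriv (\<lambda>t. (\<phi> t)\<^sup>2)) q / deriv (\<lambda>t. (\<phi> t)\<^sup>2) q
                 = - 2 * lam * \<phi> q ^ n + k * deriv \<phi> q"
  shows "is_kaehler (2*n+2) {p. qc n p \<in> I} (heis_metric n \<phi>) (heis_J n \<phi>)
       \<and> (\<forall>p. qc n p \<in> I \<longrightarrow> (\<forall>a<2*n+2. \<forall>b<2*n+2.
            kaehler_form (2*n+2) (heis_metric n \<phi>) (heis_J n \<phi>) p a b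
              = ext_d (\<lambda>x c. \<phi> (qc n x) * zeta_h n x c) p a b))
       \<and> (\<forall>p. qc n p \<in> I \<longrightarrow> (\<forall>a<2*n+2. \<forall>b<2*n+2.
            ricci (2*n+2) (heis_metric n \<phi>) p a b
              + hessian (2*n+2) (heis_metric n \<phi>) (\<lambda>x. k * \<phi> (qc n x)) p a b
              = lam * heis_metric n \<phi> p a b))"
proof -
  interpret HO n \<phi> I lam k
    using assms by (unfold_locales) auto
  have K: "is_kaehler (2*n+2) {p. qc n p \<in> I} (heis_metric n \<phi>) (heis_J n \<phi>)"
    unfolding is_kaehler_def
  proof (intro ballI conjI allI impI)
    fix p assume "p \<in> {p. qc n p \<in> I}"
    then have q: "p (2*n+1) \<in> I" by (simp add: qc_def)
    show "\<And>a b. a < 2*n+2 \<Longrightarrow> b < 2*n+2 \<Longrightarrow> heis_metric n \<phi> p a b = heis_metric n \<phi> p b a"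
      by (rule g_sym)
    show "\<And>v. \<exists>a<2*n+2. v a \<noteq> 0 \<Longrightarrow> 0 < (\<Sum>a<2*n+2. \<Sum>b<2*n+2. heis_metric n \<phi> p a b * v a * v b)"
      by (rule posdef[of p, OF q])
    show "\<And>a b. a < 2*n+2 \<Longrightarrow> b < 2*n+2 \<Longrightarrow> (\<Sum>c<2*n+2. heis_J n \<phi> p a c * heis_J n \<phi> p c b) = (if a = b then -1 else 0)"
      by (rule J2[of p, OF q])
    show "\<And>a b. a < 2*n+2 \<Longrightarrow> b < 2*n+2 \<Longrightarrow> (\<Sum>c<2*n+2. \<Sum>d<2*n+2. heis_J n \<phi> p c a * heis_J n \<phi> p d b * heis_metric n \<phi> p c d) = heis_metric n \<phi> p a b"
      by (rule JgJ[of p, OF q])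
    show "\<And>a b c. a < 2*n+2 \<Longrightarrow> b < 2*n+2 \<Longrightarrow> c < 2*n+2 \<Longrightarrow> nabla_J (2*n+2) (heis_metric n \<phi>) (heis_J n \<phi>) a c b p = 0"
      by (rule nablaJ[of p, OF q])
  qed
  show ?thesis
  proof (intro conjI K allI impI)
    fix p a b assume "qc n p \<in> I" "a < 2*n+2" "b < 2*n+2"
    then show "kaehler_form (2*n+2) (heis_metric n \<phi>) (heis_J n \<phi>) p a b
              = ext_d (\<lambda>x c. \<phi> (qc n x) * zeta_h n x c) p a b"
      using kform[of p a b] by (simp add: qc_def)
  next
    fix p a b assume "qc n p \<in> I" "a < 2*n+2" "b < 2*n+2"
    then show "ricci (2*n+2) (heis_metric n \<phi>) p a b
              + hessian (2*n+2) (heis_metric n \<phi>) (\<lambda>x. k * \<phi> (qc n x)) p a b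
              = lam * heis_metric n \<phi> p a b"
      using sol_raw[of p a b] by (simp add: qc_def)
  qed
qed

end
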